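(* Let $\kappa$ be strongly inaccessible. Then $\mathrm{id}^-(\mathbb Q_\kappa)$ is ${<}\kappa^+$-complete: the union of at most $\kappa$ many members of $\mathrm{id}^-(\mathbb Q_\kappa)$ belongs to $\mathrm{id}^-(\mathbb Q_\kappa)$.
   Context: For a cardinal $\lambda$, $S^\lambda_{\mathrm{inc}}$ is the set of strongly inaccessible cardinals below $\lambda$. A set $S\subseteq\lambda$ is nowhere stationary if for every $\delta\le\lambda$ of uncountable cofinality, $S\cap\delta$ is nonstationary in $\delta$. By induction on strongly inaccessible $\lambda$ one defines a forcing $\mathbb Q_\lambda$ and an ideal $\mathrm{id}(\mathbb Q_\lambda)$ on $2^\lambda$: $p\in\mathbb Q_\lambda$ iff $p\subseteq 2^{<\lambda}$ is closed under initial segments and there is a witness $(\tau,S,\langle N_\delta:\delta\in S\rangle)$ with: (i) $\tau$ is the trunk of $p$, the least node of $p$ having two immediate successors in $p$; (ii) if $\tau\trianglelefteq\eta\in p$ then $\eta^\frown0,\eta^\frown1\in p$; (iii) $S\subseteq S^\lambda_{\mathrm{inc}}$ is nowhere stationary; (iv) $N_\delta\in\mathrm{id}(\mathbb Q_\delta)$ for $\delta\in S$; (v) for limit $\delta<\lambda$ with $\delta\notin S$ and $\eta\in2^\delta$: $\eta\in p$ iff $\eta\restriction\sigma\in p$ for all $\sigma<\delta$; (vi) for $\delta\in S$ and $\eta\in 2^\delta$: $\eta\in p$ iff $\eta\restriction\sigma\in p$ for all $\sigma<\delta$ and $\eta\notin N_\delta$. The order is $q\le p$ iff $q\subseteq p$.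 $[p]$ is the set of $x\in 2^\lambda$ all of whose proper initial segments lie in $p$; for $\mathcal J\subseteq\mathbb Q_\lambda$, $\mathrm{set}_0(\mathcal J)=2^\lambda\setminus\bigcup_{p\in\mathcal J}[p]$. $A\in\mathrm{id}(\mathbb Q_\lambda)$ iff there are at most $\lambda$ predense sets $\mathcal J_i\subseteq\mathbb Q_\lambda$ with $A\subseteq\bigcup_i\mathrm{set}_0(\mathcal J_i)$. $\mathrm{id}^-(\mathbb Q_\kappa)$ is the family of $A\subseteq 2^\kappa$ for which there are a nowhere stationary $S\subseteq S^\kappa_{\mathrm{inc}}$ and sets $N_\delta\in\mathrm{id}(\mathbb Q_\delta)$ ($\delta\in S$) with $A\subseteq\{\eta\in2^\kappa:\{\delta\in S:\eta\restriction\delta\in N_\delta\}\text{ is unbounded in }\kappa\}$. *)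

theory Defs imports Main "HOL-Library.Equipollence" begin

text \<open>Ordinals are modelled as elements of an arbitrary well-ordered type 'a.
 An element a stands for the ordinal given by the order type of the set of its
 predecessors.\<close>

definition below_set :: "'a::wellorder \<Rightarrow> 'a set" where
  "below_set a = {x. x < a}"

definition strongly_inaccessible :: "'a::wellorder \<Rightarrow> bool" where
  "strongly_inaccessible a \<longleftrightarrow>
     \<not> countable (below_set a)
   \<and> (\<forall>b<a. lesspoll (below_set b) (below_set a))
   \<and> (\<forall>b<a. lesspoll (Pow (below_set b)) (below_set a))
   \<and> (\<forall>X. X \<subseteq> below_set a \<and> (\<forall>y<a. \<exists>x\<in>X. y \<le> x) \<longrightarrow> lepoll (below_set a) X)"

definition S_inc :: "'a::wellorder \<Rightarrow> 'a set" where
  "S_inc l = {d. d < l \<and> strongly_inaccessible d}"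

definition is_limit :: "'a::wellorder \<Rightarrow> bool" where
  "is_limit d \<longleftrightarrow> (\<exists>y. y < d) \<and> (\<forall>y<d. \<exists>z. y < z \<and> z < d)"

definition uncountable_cf :: "'a::wellorder \<Rightarrow> bool" where
  "uncountable_cf d \<longleftrightarrow>
     (\<forall>X. X \<subseteq> below_set d \<and> (\<forall>y<d. \<exists>x\<in>X. y \<le> x) \<longrightarrow> \<not> countable X)"

definition club :: "'a::wellorder \<Rightarrow> 'a set \<Rightarrow> bool" where
  "club d C \<longleftrightarrow> C \<subseteq> below_set d \<and> (\<forall>y<d. \<exists>x\<in>C. y < x)
     \<and> (\<forall>g<d. is_limit g \<and> (\<forall>y<g. \<exists>x\<in>C. y < x \<and> x < g) \<longrightarrow> g \<in> C)"

definition stationary_in :: "'a::wellorder \<Rightarrow> 'a set \<Rightarrow> bool" where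
  "stationary_in d S \<longleftrightarrow> (\<forall>C. club d C \<longrightarrow> S \<inter> C \<noteq> {})"

definition nowhere_stationary :: "'a::wellorder \<Rightarrow> 'a set \<Rightarrow> bool" where
  "nowhere_stationary l S \<longleftrightarrow>
     (\<forall>d\<le>l. uncountable_cf d \<longrightarrow> \<not> stationary_in d (S \<inter> below_set d))"

text \<open>2^d: functions 'a => bool vanishing outside d\<close>
definition seqs :: "'a::wellorder \<Rightarrow> ('a \<Rightarrow> bool) set" where
  "seqs d = {f. \<forall>x. \<not> x < d \<longrightarrow> f x = False}"

text \<open>2^{<l}: pairs (length, sequence)\<close>
definition nodes :: "'a::wellorder \<Rightarrow> ('a \<times> ('a \<Rightarrow> bool)) set" where
  "nodes l = {(g, f). g < l \<and> f \<in> seqs g}"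

definition restr :: "('a::wellorder \<Rightarrow> bool) \<Rightarrow> 'a \<Rightarrow> ('a \<Rightarrow> bool)" where
  "restr f s = (\<lambda>x. if x < s then f x else False)"

definition init_seg :: "('a::wellorder \<times> ('a \<Rightarrow> bool)) \<Rightarrow> ('a \<times> ('a \<Rightarrow> bool)) \<Rightarrow> bool" where
  "init_seg u v \<longleftrightarrow> fst u \<le> fst v \<and> snd u = restr (snd v) (fst u)"

definition osucc :: "'a::wellorder \<Rightarrow> 'a" where
  "osucc g = (LEAST c. g < c)"

definition ext :: "('a::wellorder \<times> ('a \<Rightarrow> bool)) \<Rightarrow> bool \<Rightarrow> ('a \<times> ('a \<Rightarrow> bool))" where
  "ext v i = (osucc (fst v), (snd v)(fst v := i))"

definition is_trunk :: "('a::wellorder \<times> ('a \<Rightarrow> bool)) set \<Rightarrow> ('a \<times> ('a \<Rightarrow> bool)) \<Rightarrow> bool" where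
  "is_trunk p t \<longleftrightarrow> t \<in> p \<and> ext t False \<in> p \<and> ext t True \<in> p
     \<and> (\<forall>v\<in>p. ext v False \<in> p \<and> ext v True \<in> p \<longrightarrow> init_seg t v)"

text \<open>Q_l given the ideals ID d = id(Q_d) for smaller d\<close>
definition Qf :: "('a::wellorder \<Rightarrow> ('a \<Rightarrow> bool) set set) \<Rightarrow> 'a \<Rightarrow> ('a \<times> ('a \<Rightarrow> bool)) set set" where
  "Qf ID l = {p. p \<subseteq> nodes l \<and> (\<forall>v\<in>p. \<forall>u. init_seg u v \<longrightarrow> u \<in> p)
     \<and> (\<exists>t S N. is_trunk p t
        \<and> (\<forall>v\<in>p. init_seg t v \<longrightarrow> ext v False \<in> p \<and> ext v True \<in> p)
        \<and> S \<subseteq> S_inc l \<and> nowhere_stationary l S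
        \<and> (\<forall>d\<in>S. N d \<in> ID d)
        \<and> (\<forall>d<l. is_limit d \<and> d \<notin> S \<longrightarrow>
             (\<forall>f\<in>seqs d. (d, f) \<in> p \<longleftrightarrow> (\<forall>s<d. (s, restr f s) \<in> p)))
        \<and> (\<forall>d\<in>S. \<forall>f\<in>seqs d. (d, f) \<in> p \<longleftrightarrow> (\<forall>s<d. (s, restr f s) \<in> p) \<and> f \<notin> N d))}"

definition branches :: "'a::wellorder \<Rightarrow> ('a \<times> ('a \<Rightarrow> bool)) set \<Rightarrow> ('a \<Rightarrow> bool) set" where
  "branches l p = {x \<in> seqs l. \<forall>g<l. (g, restr x g) \<in> p}"

definition set0 :: "'a::wellorder \<Rightarrow> ('a \<times> ('a \<Rightarrow> bool)) set set \<Rightarrow> ('a \<Rightarrow> bool) set" where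
  "set0 l J = seqs l - (\<Union>p\<in>J. branches l p)"

definition predense :: "'t set set \<Rightarrow> 't set set \<Rightarrow> bool" where
  "predense Q J \<longleftrightarrow> J \<subseteq> Q \<and> (\<forall>p\<in>Q. \<exists>q\<in>J. \<exists>r\<in>Q. r \<subseteq> p \<and> r \<subseteq> q)"

definition idf :: "('a::wellorder \<Rightarrow> ('a \<Rightarrow> bool) set set) \<Rightarrow> 'a \<Rightarrow> ('a \<Rightarrow> bool) set set" where
  "idf ID l = {A. A \<subseteq> seqs l \<and> (\<exists>I J. I \<subseteq> below_set l
      \<and> (\<forall>i\<in>I. predense (Qf ID l) (J i)) \<and> A \<subseteq> (\<Union>i\<in>I. set0 l (J i)))}"

definition idQ :: "'a::wellorder \<Rightarrow> ('a \<Rightarrow> bool) set set" where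
  "idQ = wfrec {(x, y). x < y} (\<lambda>rec l. idf rec l)"

definition Q :: "'a::wellorder \<Rightarrow> ('a \<times> ('a \<Rightarrow> bool)) set set" where
  "Q l = Qf idQ l"

definition id_minus :: "'a::wellorder \<Rightarrow> ('a \<Rightarrow> bool) set set" where
  "id_minus k = {A. A \<subseteq> seqs k \<and> (\<exists>S N. S \<subseteq> S_inc k \<and> nowhere_stationary k S
      \<and> (\<forall>d\<in>S. N d \<in> idQ d)
      \<and> A \<subseteq> {x \<in> seqs k. \<forall>b<k. \<exists>d\<in>S. b \<le> d \<and> restr x d \<in> N d})}"

end

theory Submission
  imports Defs
begin

lemma idQ_unfold: "idQ l = idf (cut idQ {(x, y). x < y} l) l"
  unfolding idQ_def by (rule wfrec[OF wellorder_class.wf])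

lemma times_same_lepoll: "infinite A \<Longrightarrow> A \<times> A \<lesssim> A"
  using card_of_Times_same_infinite eqpoll_iff_card_of_ordIso eqpoll_imp_lepoll by blast

lemma idf_union:
  assumes inf: "infinite (below_set l)" and K: "K \<lesssim> below_set l"
    and F: "\<forall>k\<in>K. F k \<in> idf ID l"
  shows "(\<Union>k\<in>K. F k) \<in> idf ID l"
proof -
  have "\<forall>k\<in>K. \<exists>IJ. fst IJ \<subseteq> below_set l \<and> (\<forall>i\<in>fst IJ. predense (Qf ID l) (snd IJ i))
       \<and> F k \<subseteq> (\<Union>i\<in>fst IJ. set0 l (snd IJ i))"
    using F unfolding idf_def by fastforce
  then obtain IJ where IJ: "\<And>k. k\<in>K \<Longrightarrow> fst (IJ k) \<subseteq> below_set l \<and> (\<forall>i\<in>fst (IJ k). predense (Qf ID l) (snd (IJ k) i))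
       \<and> F k \<subseteq> (\<Union>i\<in>fst (IJ k). set0 l (snd (IJ k) i))" by metis
  define Sg where "Sg = Sigma K (\<lambda>k. fst (IJ k))"
  have "Sg \<lesssim> below_set l \<times> below_set l"
  proof -
    obtain h where h: "inj_on h K" "h ` K \<subseteq> below_set l" using K unfolding lepoll_def by blast
    have "Sg \<lesssim> Sigma (below_set l) (\<lambda>_. below_set l)"
      unfolding Sg_def
      by (rule Sigma_inj_lepoll_mono[OF h]) (meson IJ subset_imp_lepoll)
    then show ?thesis by simp
  qed
  also have "\<dots> \<lesssim> below_set l" using times_same_lepoll[OF inf] .
  finally obtain h where h: "inj_on h Sg" "h ` Sg \<subseteq> below_set l" unfolding lepoll_def by blast
  define I' where "I' = h ` Sg"
  define J' where "J' = (\<lambda>x. case inv_into Sg h x of (k, i) \<Rightarrow> snd (IJ k) i)"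
  have J'h: "J' (h (k, i)) = snd (IJ k) i" if "(k, i) \<in> Sg" for k i
    using that h(1) unfolding J'_def by simp
  have "F k \<subseteq> seqs l" if "k \<in> K" for k using F that unfolding idf_def by blast
  then have sub: "(\<Union>k\<in>K. F k) \<subseteq> seqs l" by blast
  have pd: "\<forall>x\<in>I'. predense (Qf ID l) (J' x)"
    unfolding I'_def Sg_def using J'h IJ by (auto simp: Sg_def)
  have cov: "(\<Union>k\<in>K. F k) \<subseteq> (\<Union>x\<in>I'. set0 l (J' x))"
  proof
    fix y assume "y \<in> (\<Union>k\<in>K. F k)"
    then obtain k where k: "k \<in> K" "y \<in> F k" by blast
    then obtain i where i: "i \<in> fst (IJ k)" "y \<in> set0 l (snd (IJ k) i)" using IJ by blast
    then have "(k, i) \<in> Sg" using k unfolding Sg_def by blast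
    then have "h (k, i) \<in> I'" "set0 l (J' (h (k, i))) = set0 l (snd (IJ k) i)" using J'h unfolding I'_def by auto
    then show "y \<in> (\<Union>x\<in>I'. set0 l (J' x))" using i by blast
  qed
  show ?thesis unfolding idf_def using sub pd cov h(2) unfolding I'_def by blast
qed

lemma idQ_union:
  assumes inf: "infinite (below_set l)" and K: "K \<lesssim> below_set l"
    and F: "\<forall>k\<in>K. F k \<in> idQ l"
  shows "(\<Union>k\<in>K. F k) \<in> idQ l"
  using idf_union[OF inf K, of F] F idQ_unfold[of l] by simp

lemma ucf_nonempty: "uncountable_cf d \<Longrightarrow> \<exists>y. y < d"
  unfolding uncountable_cf_def below_set_def by (metis countable_empty empty_subsetI)

lemma ucf_limit: "uncountable_cf d \<Longrightarrow> y < d \<Longrightarrow> \<exists>z. y < z \<and> z < d"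
proof (rule ccontr)
  assume u: "uncountable_cf d" and y: "y < d" and n: "\<not> (\<exists>z. y < z \<and> z < d)"
  have "{y} \<subseteq> below_set d \<and> (\<forall>w<d. \<exists>x\<in>{y}. w \<le> x)"
    using y n unfolding below_set_def by (auto simp: not_less)
  with u show False unfolding uncountable_cf_def by auto
qed

lemma iter_mono:
  fixes d :: "'a::wellorder"
  assumes "\<forall>y<d. y < f y \<and> f y < d" "y0 < d"
  shows "(f ^^ n) y0 < d" and "(f ^^ n) y0 < (f ^^ Suc n) y0"
proof -
  show 1: "(f ^^ n) y0 < d" for n by (induction n) (use assms in auto)
  show "(f ^^ n) y0 < (f ^^ Suc n) y0" using 1[of n] assms by simp
qed

lemma iter_strict:
  fixes d :: "'a::wellorder"
  assumes "\<forall>y<d. y < f y \<and> f y < d" "y0 < d" "m < n"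
  shows "(f ^^ m) y0 < (f ^^ n) y0"
proof -
  have "strict_mono (\<lambda>n. (f ^^ n) y0)"
    unfolding strict_mono_Suc_iff using iter_mono[OF assms(1,2)] by blast
  then show ?thesis using assms(3) by (simp add: strict_mono_def)
qed

lemma omega_sup:
  assumes u: "uncountable_cf d" and y0: "y0 < d" and f: "\<forall>y<d. y < f y \<and> f y < d"
  shows "\<exists>z<d. (\<forall>n. (f ^^ n) y0 < z) \<and> is_limit z \<and> (\<forall>w<z. \<exists>n. w < (f ^^ n) y0)"
proof -
  define s where "s n = (f ^^ n) y0" for n
  have sd: "s n < d" for n unfolding s_def using iter_mono[OF f y0] by blast
  have ss: "s n < s (Suc n)" for n unfolding s_def using iter_mono[OF f y0] by blast
  have "range s \<subseteq> below_set d" using sd unfolding below_set_def by auto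
  moreover have "countable (range s)" by simp
  ultimately have "\<not> (\<forall>w<d. \<exists>x\<in>range s. w \<le> x)" using u unfolding uncountable_cf_def by blast
  then obtain w where w: "w < d" "\<forall>n. s n < w" by (auto simp: not_le)
  define z where "z = (LEAST w. \<forall>n. s n \<le> w)"
  have zub: "\<forall>n. s n \<le> z" unfolding z_def by (rule LeastI[of _ w]) (use w in \<open>auto intro: less_imp_le\<close>)
  have zw: "z \<le> w" unfolding z_def by (rule Least_le) (use w in \<open>auto intro: less_imp_le\<close>)
  have zs: "\<forall>n. s n < z" using zub ss by (meson less_le_trans)
  have below: "\<exists>n. v < s n" if "v < z" for v
  proof (rule ccontr)
    assume "\<not> (\<exists>n. v < s n)"
    then have "\<forall>n. s n \<le> v" by (auto simp: not_less)
    then have "z \<le> v" unfolding z_def by (rule Least_le)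
    with that show False by simp
  qed
  have lim: "is_limit z" unfolding is_limit_def
  proof (intro conjI allI impI)
    show "\<exists>y. y < z" using zs by blast
    fix v assume "v < z"
    then obtain n where "v < s n" using below by blast
    then show "\<exists>za. v < za \<and> za < z" using zs by blast
  qed
  show ?thesis using zw w(1) zs lim below unfolding s_def by (intro exI[of _ z]) auto
qed

lemma ns_caseP:
  fixes d :: "'a::wellorder"
  assumes u: "uncountable_cf d" and X: "X \<subseteq> below_set d" "\<forall>y<d. \<exists>x\<in>X. y \<le> x"
    and b: "b < d" "X \<lesssim> below_set b"
    and S: "\<forall>\<delta>\<in>S. strongly_inaccessible \<delta>"
  shows "\<not> stationary_in d (S \<inter> below_set d)"
proof -
  define C where "C = {\<gamma>. \<gamma> < d \<and> b < \<gamma> \<and> is_limit \<gamma> \<and> (\<forall>y<\<gamma>. \<exists>x\<in>X. y < x \<and> x < \<gamma>)}"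
  have "club d C" unfolding club_def
  proof (intro conjI allI impI)
    show "C \<subseteq> below_set d" unfolding C_def below_set_def by auto
  next
    fix y assume y: "y < d"
    define f where "f v = (SOME x. x \<in> X \<and> v < x)" for v
    have fX: "f v \<in> X \<and> v < f v" if vd: "v < d" for v
    proof -
      obtain z where "v < z" "z < d" using ucf_limit[OF u vd] by blast
      then obtain x where "x \<in> X" "v < x" using X(2) by (meson less_le_trans)
      then show ?thesis unfolding f_def by (metis (mono_tags, lifting) someI)
    qed
    have f: "\<forall>v<d. v < f v \<and> f v < d" using fX X(1) unfolding below_set_def by blast
    have y0: "max y b < d" using y b by simp
    obtain z where z: "z < d" "\<forall>n. (f ^^ n) (max y b) < z" "is_limit z"
      "\<forall>w<z. \<exists>n. w < (f ^^ n) (max y b)"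
      using omega_sup[OF u y0 f] by blast
    have "z \<in> C" unfolding C_def
    proof (intro CollectI conjI allI impI)
      show "z < d" by fact
      show "b < z" using z(2)[rule_format, of 0] by simp
      show "is_limit z" by fact
      fix w assume "w < z"
      then obtain n where n: "w < (f ^^ n) (max y b)" using z(4) by blast
      have "(f ^^ n) (max y b) < d" using iter_mono[OF f y0] by blast
      then have "(f ^^ Suc n) (max y b) \<in> X" "(f ^^ n) (max y b) < (f ^^ Suc n) (max y b)"
        using fX by auto
      then show "\<exists>x\<in>X. w < x \<and> x < z" using n z(2) by (meson less_trans)
    qed
    moreover have "y < z" using z(2)[rule_format, of 0] by simp
    ultimately show "\<exists>x\<in>C. y < x" by blast
  next
    fix g assume g: "g < d" "is_limit g \<and> (\<forall>y<g. \<exists>x\<in>C. y < x \<and> x < g)"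
    have "b < g"
    proof -
      obtain y where "y < g" using g unfolding is_limit_def by blast
      then obtain x where "x \<in> C" "x < g" using g by blast
      then show ?thesis unfolding C_def by auto
    qed
    moreover have "\<forall>y<g. \<exists>x\<in>X. y < x \<and> x < g"
    proof (intro allI impI)
      fix y assume "y < g"
      then obtain x where x: "x \<in> C" "y < x" "x < g" using g by blast
      then obtain x' where "x' \<in> X" "y < x'" "x' < x" unfolding C_def by blast
      then show "\<exists>x\<in>X. y < x \<and> x < g" using x by (meson less_trans)
    qed
    ultimately show "g \<in> C" unfolding C_def using g by blast
  qed
  moreover have "S \<inter> below_set d \<inter> C = {}"
  proof (rule ccontr)
    assume "S \<inter> below_set d \<inter> C \<noteq> {}"
    then obtain \<delta> where \<delta>: "\<delta> \<in> S" "\<delta> \<in> C" by blast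
    have si: "strongly_inaccessible \<delta>" using S \<delta> by blast
    have "X \<inter> below_set \<delta> \<subseteq> below_set \<delta> \<and> (\<forall>y<\<delta>. \<exists>x\<in>X \<inter> below_set \<delta>. y \<le> x)"
      using \<delta>(2) unfolding C_def below_set_def by (auto intro: less_imp_le)
    then have "below_set \<delta> \<lesssim> X \<inter> below_set \<delta>" using si unfolding strongly_inaccessible_def by blast
    also have "\<dots> \<lesssim> X" by (rule subset_imp_lepoll) blast
    also have "\<dots> \<lesssim> below_set b" by fact
    finally have 1: "below_set \<delta> \<lesssim> below_set b" .
    have "b < \<delta>" using \<delta>(2) unfolding C_def by blast
    then have "below_set b \<prec> below_set \<delta>" using si unfolding strongly_inaccessible_def by blast
    with 1 show False by (meson lepoll_antisym lesspoll_def)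
  qed
  ultimately show ?thesis unfolding stationary_in_def by blast
qed

lemma ns_caseNP:
  fixes d :: "'a::wellorder" and g :: "'i \<Rightarrow> 'a"
  assumes u: "uncountable_cf d"
    and nP: "\<And>X b. X \<subseteq> below_set d \<Longrightarrow> b < d \<Longrightarrow> X \<lesssim> below_set b \<Longrightarrow> \<not> (\<forall>y<d. \<exists>x\<in>X. y \<le> x)"
    and inj: "inj_on g I"
    and Cl: "\<And>i. i \<in> I \<Longrightarrow> club d (C i) \<and> SS i \<inter> below_set d \<inter> C i = {}"
  shows "\<not> stationary_in d ({\<delta>. \<exists>i\<in>I. g i < \<delta> \<and> \<delta> \<in> SS i} \<inter> below_set d)"
proof -
  define D where "D = {\<gamma>. \<gamma> < d \<and> (\<forall>i\<in>I. g i < \<gamma> \<longrightarrow> \<gamma> \<in> C i)}"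
  define cf where "cf i v = (SOME x. x \<in> C i \<and> v < x)" for i v
  have Csub: "C i \<subseteq> below_set d" if "i \<in> I" for i
    using Cl[OF that] unfolding club_def by (elim conjE)
  have Cunb: "\<exists>x\<in>C i. v < x" if "i \<in> I" "v < d" for i v
    using Cl[OF that(1)] that(2) unfolding club_def by (elim conjE) simp
  have cfC: "cf i v \<in> C i \<and> v < cf i v" if iv: "i \<in> I" "v < d" for i v
    unfolding cf_def by (rule someI_ex[of "\<lambda>x. x \<in> C i \<and> v < x"]) (use Cunb[OF iv] in blast)
  have cfd: "cf i v < d" if iv: "i \<in> I" "v < d" for i v
    using cfC[OF iv] Csub[OF iv(1)] unfolding below_set_def by blast
  define T where "T v = {i\<in>I. g i < v}" for v
  define f where "f v = (if T v = {} then (SOME z. v < z \<and> z < d)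
      else (SOME w. w < d \<and> (\<forall>i\<in>T v. cf i v < w)))" for v
  have fprop: "v < f v \<and> f v < d \<and> (\<forall>i\<in>T v. cf i v < f v)" if vd: "v < d" for v
  proof (cases "T v = {}")
    case True
    have "\<exists>z. v < z \<and> z < d" using ucf_limit[OF u vd] by blast
    then have "v < (SOME z. v < z \<and> z < d) \<and> (SOME z. v < z \<and> z < d) < d"
      by (rule someI_ex[of "\<lambda>z. v < z \<and> z < d"])
    moreover have "f v = (SOME z. v < z \<and> z < d)" using True unfolding f_def by simp
    ultimately have "v < f v \<and> f v < d" by simp
    then show ?thesis using True by blast
  next
    case False
    have "(\<lambda>i. cf i v) ` T v \<lesssim> T v" by (rule image_lepoll)
    also have "T v \<lesssim> below_set v" unfolding lepoll_def T_def below_set_def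
      by (rule exI[of _ g]) (use inj in \<open>auto simp: inj_on_def\<close>)
    finally have Xl: "(\<lambda>i. cf i v) ` T v \<lesssim> below_set v" .
    have Xs: "(\<lambda>i. cf i v) ` T v \<subseteq> below_set d" using cfd vd unfolding T_def below_set_def by auto
    have "\<not> (\<forall>y<d. \<exists>x\<in>(\<lambda>i. cf i v) ` T v. y \<le> x)"
      by (rule nP[OF Xs vd Xl])
    then have "\<exists>w. w < d \<and> (\<forall>i\<in>T v. cf i v < w)" by (auto simp: not_le)
    then have "(SOME w. w < d \<and> (\<forall>i\<in>T v. cf i v < w)) < d \<and> (\<forall>i\<in>T v. cf i v < (SOME w. w < d \<and> (\<forall>i\<in>T v. cf i v < w)))"
      by (rule someI_ex[of "\<lambda>w. w < d \<and> (\<forall>i\<in>T v. cf i v < w)"])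
    moreover have "f v = (SOME w. w < d \<and> (\<forall>i\<in>T v. cf i v < w))" using False unfolding f_def by simp
    ultimately have fw: "f v < d \<and> (\<forall>i\<in>T v. cf i v < f v)" by simp
    obtain i where "i \<in> T v" using False by blast
    then have "v < cf i v" "cf i v < f v" using cfC[of i v] vd fw unfolding T_def by auto
    then show ?thesis using fw by auto
  qed
  have f: "\<forall>v<d. v < f v \<and> f v < d" using fprop by blast
  have "club d D" unfolding club_def
  proof (intro conjI allI impI)
    show "D \<subseteq> below_set d" unfolding D_def below_set_def by auto
  next
    fix y assume y: "y < d"
    obtain z where z: "z < d" "\<forall>n. (f ^^ n) y < z" "is_limit z" "\<forall>w<z. \<exists>n. w < (f ^^ n) y"
      using omega_sup[OF u y f] by blast
    have "z \<in> D" unfolding D_def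
    proof (intro CollectI conjI ballI impI)
      show "z < d" by fact
      fix i assume i: "i \<in> I" "g i < z"
      then obtain n where n: "g i < (f ^^ n) y" using z(4) by blast
      have "\<forall>w<z. \<exists>x\<in>C i. w < x \<and> x < z"
      proof (intro allI impI)
        fix w assume "w < z"
        then obtain m where m: "w < (f ^^ m) y" using z(4) by blast
        define m' where "m' = max m n"
        have ile: "(f ^^ a) y \<le> (f ^^ b) y" if "a \<le> b" for a b
        proof (cases "a < b")
          case True then show ?thesis using iter_strict[OF f y True] by simp
        next
          case False then show ?thesis using that by simp
        qed
        have le: "(f ^^ m) y \<le> (f ^^ m') y" "(f ^^ n) y \<le> (f ^^ m') y"
          unfolding m'_def by (rule ile, simp)+
        have vd: "(f ^^ m') y < d" using iter_mono[OF f y] by blast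
        have "i \<in> T ((f ^^ m') y)" unfolding T_def using i n le by auto
        then have "cf i ((f ^^ m') y) < (f ^^ Suc m') y" using fprop[OF vd] by simp
        moreover have "cf i ((f ^^ m') y) \<in> C i" "(f ^^ m') y < cf i ((f ^^ m') y)" using cfC[OF i(1) vd] by auto
        ultimately show "\<exists>x\<in>C i. w < x \<and> x < z" using m le z(2)[rule_format, of "Suc m'"]
          by (meson le_less_trans less_trans)
      qed
      then show "z \<in> C i" using Cl[OF i(1)] z(1,3) unfolding club_def by blast
    qed
    moreover have "y < z" using z(2)[rule_format, of 0] by simp
    ultimately show "\<exists>x\<in>D. y < x" by blast
  next
    fix \<gamma> assume g: "\<gamma> < d" "is_limit \<gamma> \<and> (\<forall>y<\<gamma>. \<exists>x\<in>D. y < x \<and> x < \<gamma>)"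
    have "\<gamma> \<in> C i" if i: "i \<in> I" "g i < \<gamma>" for i
    proof -
      have "\<forall>y<\<gamma>. \<exists>x\<in>C i. y < x \<and> x < \<gamma>"
      proof (intro allI impI)
        fix y assume "y < \<gamma>"
        then have "max y (g i) < \<gamma>" using i by simp
        then obtain x where x: "x \<in> D" "max y (g i) < x" "x < \<gamma>" using g by blast
        then have "x \<in> C i" using i unfolding D_def by auto
        then show "\<exists>x\<in>C i. y < x \<and> x < \<gamma>" using x by auto
      qed
      then show ?thesis using Cl[OF i(1)] g unfolding club_def by blast
    qed
    then show "\<gamma> \<in> D" unfolding D_def using g by blast
  qed
  moreover have "{\<delta>. \<exists>i\<in>I. g i < \<delta> \<and> \<delta> \<in> SS i} \<inter> below_set d \<inter> D = {}"
  proof (rule ccontr)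
    assume "{\<delta>. \<exists>i\<in>I. g i < \<delta> \<and> \<delta> \<in> SS i} \<inter> below_set d \<inter> D \<noteq> {}"
    then obtain \<delta> i where "i \<in> I" "g i < \<delta>" "\<delta> \<in> SS i" "\<delta> \<in> below_set d" "\<delta> \<in> D" by blast
    then show False using Cl[of i] unfolding D_def by blast
  qed
  ultimately show ?thesis unfolding stationary_in_def by blast
qed

lemma diag_ns:
  fixes k :: "'a::wellorder" and g :: "'i \<Rightarrow> 'a"
  assumes inj: "inj_on g I" and ns: "\<forall>i\<in>I. nowhere_stationary k (SS i)"
    and Sinc: "\<forall>i\<in>I. SS i \<subseteq> S_inc k"
  shows "nowhere_stationary k {\<delta>. \<exists>i\<in>I. g i < \<delta> \<and> \<delta> \<in> SS i}"
  unfolding nowhere_stationary_def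
proof (intro allI impI)
  fix d assume d: "d \<le> k" "uncountable_cf d"
  show "\<not> stationary_in d ({\<delta>. \<exists>i\<in>I. g i < \<delta> \<and> \<delta> \<in> SS i} \<inter> below_set d)"
  proof (cases "\<exists>X b. X \<subseteq> below_set d \<and> b < d \<and> X \<lesssim> below_set b \<and> (\<forall>y<d. \<exists>x\<in>X. y \<le> x)")
    case True
    then obtain X b where "X \<subseteq> below_set d" "b < d" "X \<lesssim> below_set b" "\<forall>y<d. \<exists>x\<in>X. y \<le> x" by blast
    moreover have "\<forall>\<delta>\<in>{\<delta>. \<exists>i\<in>I. g i < \<delta> \<and> \<delta> \<in> SS i}. strongly_inaccessible \<delta>"
      using Sinc unfolding S_inc_def by blast
    ultimately show ?thesis using ns_caseP[OF d(2)] by blast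
  next
    case False
    have "\<forall>i\<in>I. \<exists>C. club d C \<and> SS i \<inter> below_set d \<inter> C = {}"
      using ns d unfolding nowhere_stationary_def stationary_in_def by blast
    then obtain C where "\<And>i. i \<in> I \<Longrightarrow> club d (C i) \<and> SS i \<inter> below_set d \<inter> C i = {}" by metis
    then show ?thesis
    proof (intro ns_caseNP[OF d(2) _ inj])
      fix X b assume "X \<subseteq> below_set d" "b < d" "X \<lesssim> below_set b"
      then show "\<not> (\<forall>y<d. \<exists>x\<in>X. y \<le> x)" using False by blast
    qed
  qed
qed

lemma inacc_above:
  fixes k :: "'a::wellorder"
  assumes si: "strongly_inaccessible k" and a: "a < k"
  shows "\<exists>y. a < y \<and> y < k"
proof (rule ccontr)
  assume "\<not> (\<exists>y. a < y \<and> y < k)"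
  then have "{a} \<subseteq> below_set k \<and> (\<forall>y<k. \<exists>x\<in>{a}. y \<le> x)"
    using a unfolding below_set_def by (auto simp: not_less)
  then have "below_set k \<lesssim> {a}" using si unfolding strongly_inaccessible_def by blast
  then have "countable (below_set k)" using countable_lepoll by blast
  then show False using si unfolding strongly_inaccessible_def by blast
qed

theorem lemma3p7:
  fixes k :: "'a::wellorder" and I :: "'i set" and A :: "'i \<Rightarrow> ('a \<Rightarrow> bool) set"
  assumes "strongly_inaccessible k"
    and "lepoll I (below_set k)"
    and "\<forall>i\<in>I. A i \<in> id_minus k"
  shows "(\<Union>i\<in>I. A i) \<in> id_minus k"
proof -
  obtain g where g: "inj_on g I" "g ` I \<subseteq> below_set k" using assms(2) unfolding lepoll_def by blast
  define P where "P i S N \<longleftrightarrow> S \<subseteq> S_inc k \<and> nowhere_stationary k S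
      \<and> (\<forall>d\<in>S. N d \<in> idQ d)
      \<and> A i \<subseteq> {x \<in> seqs k. \<forall>b<k. \<exists>d\<in>S. b \<le> d \<and> restr x d \<in> N d}" for i S N
  have h: "\<forall>i\<in>I. \<exists>S N. P i S N"
  proof
    fix i assume "i \<in> I"
    then have "A i \<in> id_minus k" using assms(3) by blast
    then show "\<exists>S N. P i S N" unfolding id_minus_def P_def by blast
  qed
  obtain SS0 where h1: "\<forall>i\<in>I. \<exists>N. P i (SS0 i) N" using bchoice[OF h] by blast
  obtain NN0 where h2: "\<forall>i\<in>I. P i (SS0 i) (NN0 i)" using bchoice[OF h1] by blast
  define SN where "SN i = (SS0 i, NN0 i)" for i
  have SN: "fst (SN i) \<subseteq> S_inc k \<and> nowhere_stationary k (fst (SN i))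
      \<and> (\<forall>d\<in>fst (SN i). snd (SN i) d \<in> idQ d)
      \<and> A i \<subseteq> {x \<in> seqs k. \<forall>b<k. \<exists>d\<in>fst (SN i). b \<le> d \<and> restr x d \<in> snd (SN i) d}" if "i \<in> I" for i
    using h2 that unfolding SN_def P_def by simp
  define SS where "SS i = fst (SN i)" for i
  define NN where "NN i = snd (SN i)" for i
  define S where "S = {\<delta>. \<exists>i\<in>I. g i < \<delta> \<and> \<delta> \<in> SS i}"
  define N where "N \<delta> = (\<Union>i\<in>{i\<in>I. g i < \<delta> \<and> \<delta> \<in> SS i}. NN i \<delta>)" for \<delta>
  have Sinc: "S \<subseteq> S_inc k" using SN unfolding S_def SS_def by blast
  have ns: "nowhere_stationary k S" unfolding S_def
    by (rule diag_ns[OF g(1)]) (use SN in \<open>auto simp: SS_def\<close>)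
  have Nid: "\<forall>d\<in>S. N d \<in> idQ d"
  proof
    fix d assume d: "d \<in> S"
    then have "strongly_inaccessible d" using Sinc unfolding S_inc_def by blast
    then have "\<not> countable (below_set d)" unfolding strongly_inaccessible_def by (elim conjE)
    then have inf: "infinite (below_set d)" using countable_finite by blast
    have K: "{i\<in>I. g i < d \<and> d \<in> SS i} \<lesssim> below_set d" unfolding lepoll_def below_set_def
      by (rule exI[of _ g]) (use g(1) in \<open>auto simp: inj_on_def\<close>)
    have "\<forall>i\<in>{i\<in>I. g i < d \<and> d \<in> SS i}. NN i d \<in> idQ d"
    proof
      fix i assume "i \<in> {i\<in>I. g i < d \<and> d \<in> SS i}"
      then have i: "i \<in> I" "d \<in> SS i" by auto
      have "\<forall>d\<in>SS i. NN i d \<in> idQ d" using SN[OF i(1)] unfolding SS_def NN_def by (elim conjE)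
      then show "NN i d \<in> idQ d" using i(2) by blast
    qed
    then show "N d \<in> idQ d" unfolding N_def by (rule idQ_union[OF inf K])
  qed
  have cov: "(\<Union>i\<in>I. A i) \<subseteq> {x \<in> seqs k. \<forall>b<k. \<exists>d\<in>S. b \<le> d \<and> restr x d \<in> N d}"
  proof
    fix x assume "x \<in> (\<Union>i\<in>I. A i)"
    then obtain i where i: "i \<in> I" "x \<in> A i" by blast
    then have x: "x \<in> seqs k" "\<forall>b<k. \<exists>d\<in>SS i. b \<le> d \<and> restr x d \<in> NN i d"
      using SN[OF i(1)] unfolding SS_def NN_def by blast+
    have "\<exists>d\<in>S. b \<le> d \<and> restr x d \<in> N d" if b: "b < k" for b
    proof -
      have "g i < k" using g(2) i(1) unfolding below_set_def by blast
      then obtain y where y: "g i < y" "y < k" using inacc_above[OF assms(1)] by blast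
      then have "max b y < k" using b by simp
      then obtain d where d: "d \<in> SS i" "max b y \<le> d" "restr x d \<in> NN i d" using x(2) by blast
      then have "y \<le> d" by simp
      then have gd: "g i < d" using y(1) by (rule order.strict_trans2[rotated])
      then have "d \<in> S" unfolding S_def using i(1) d(1) by blast
      moreover have "restr x d \<in> N d" unfolding N_def using i(1) gd d by blast
      ultimately show ?thesis using d(2) by auto
    qed
    then show "x \<in> {x \<in> seqs k. \<forall>b<k. \<exists>d\<in>S. b \<le> d \<and> restr x d \<in> N d}" using x(1) by blast
  qed
  have sub: "(\<Union>i\<in>I. A i) \<subseteq> seqs k" using cov by blast
  show ?thesis unfolding id_minus_def
    apply (rule CollectI, rule conjI[OF sub])
    apply (rule exI[of _ S], rule exI[of _ N])
    using Sinc ns Nid cov by blast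
qed

end
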